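(* Let a General Utility Markov Game (see context) satisfy (A1) for every $i$ and every $\pi_{-i}\in\Pi_{-i}$, $(\lambda_1,\dots,\lambda_N)\mapsto F_i(\lambda_1,\dots,\lambda_N,\pi_{-i})$ is jointly concave, and (A2) $d_\mu^\pi(s)>0$ for all $\pi\in\Pi$, $s\in\mathcal S$. Let $v(\pi)=(\nabla_{\pi_i}u_{\mu,i}(\pi))_{i\in\mathcal N}$. Then $\pi^\star\in\Pi$ is a Nash equilibrium if and only if $\pi^\star=\mathrm{Proj}_\Pi(\pi^\star+\eta\,v(\pi^\star))$ for all $\eta>0$, equivalently if and only if $\pi_i^\star=\mathrm{Proj}_{\Pi_i}(\pi_i^\star+\eta\,\nabla_{\pi_i}u_{\mu,i}(\pi^\star))$ for all $i\in\mathcal N$ and all $\eta>0$, where $\mathrm{Proj}$ denotes Euclidean projection.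
   Context: A GUMG consists of: agents $\mathcal N=\{1,\dots,N\}$; finite state space $\mathcal S$; finite action sets $\mathcal A_i$, joint $\mathcal A=\prod_i\mathcal A_i$; transition kernel $P:\mathcal S\times\mathcal A\to\Delta(\mathcal S)$; initial distribution $\mu$; discount $\gamma\in(0,1)$; differentiable $F_i:\Lambda\times\Pi_{-i}\to\mathbb R$, $\Lambda=\prod_i\Delta(\mathcal S\times\mathcal A_i)$. Policies $\Pi_i=\Delta(\mathcal A_i)^{\mathcal S}$ as vectors $(\pi_i(a_i|s))$ in Euclidean space; $\Pi=\prod_i\Pi_i$; $\pi(a|s)=\prod_i\pi_i(a_i|s)$. With $\mathbb P_{\mu,\pi}$ the law of the induced chain ($s_0\sim\mu$): $d_\mu^\pi(s)=(1-\gamma)\sum_t\gamma^t\mathbb P_{\mu,\pi}(s_t=s)$, $\lambda_{\mu,i}^\pi(s,a_i)=(1-\gamma)\sum_t\gamma^t\mathbb P_{\mu,\pi}(s_t=s,a_{i,t}=a_i)$. Utilities $u_{\mu,i}(\pi)=F_i(\lambda_{\mu,1}^\pi,\dots,\lambda_{\mu,N}^\pi,\pi_{-i})$; $\nabla_{\pi_i}$ is the gradient w.r.t. coordinates $\pi_i(a_i|s)$. $\pi^\star$ is a Nash equilibrium if $u_{\mu,i}(\pi_i',\pi^\star_{-i})\le u_{\mu,i}(\pi^\star)$ for all $i$ and $\pi_i'\in\Pi_i$. *)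

theory Defs
  imports "HOL-Analysis.Analysis"
begin

text \<open>All agents' actions
live in a common finite type 'a; agent i's action set is A i. A policy of agent i is an
element of real^'a^'s (coordinates p$s$a = pi_i(a|s)); coordinates with a outside A i are
forced to be 0, so the Euclidean space R^(S x A_i) is embedded isometrically.\<close>

definition joint_actions :: "('n \<Rightarrow> 'a set) \<Rightarrow> ('n \<Rightarrow> 'a) set" where
  "joint_actions A = {a. \<forall>i. a i \<in> A i}"

definition policy_set :: "'a::finite set \<Rightarrow> (real^'a^'s::finite) set" where
  "policy_set B = {p. \<forall>s. (\<forall>a. 0 \<le> p$s$a) \<and> (\<forall>a. a \<notin> B \<longrightarrow> p$s$a = 0)
                          \<and> (\<Sum>a\<in>B. p$s$a) = 1}"

definition profile_set :: "('n::finite \<Rightarrow> 'a::finite set) \<Rightarrow> (real^'a^'s::finite^'n) set" where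
  "profile_set A = {\<pi>. \<forall>i. \<pi>$i \<in> policy_set (A i)}"

definition occ_set :: "('n::finite \<Rightarrow> 'a::finite set) \<Rightarrow> (real^'a^'s::finite^'n) set" where
  "occ_set A = {l. \<forall>i. (\<forall>s a. 0 \<le> l$i$s$a) \<and> (\<forall>s a. a \<notin> A i \<longrightarrow> l$i$s$a = 0)
                        \<and> (\<Sum>s\<in>UNIV. \<Sum>a\<in>A i. l$i$s$a) = 1}"

definition joint_prob :: "real^'a::finite^'s::finite^'n::finite \<Rightarrow> 's \<Rightarrow> ('n \<Rightarrow> 'a) \<Rightarrow> real" where
  "joint_prob \<pi> s a = (\<Prod>i\<in>UNIV. \<pi>$i$s$(a i))"

fun state_dist :: "('n::finite \<Rightarrow> 'a::finite set) \<Rightarrow> ('s::finite \<Rightarrow> ('n \<Rightarrow> 'a) \<Rightarrow> 's \<Rightarrow> real)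
    \<Rightarrow> ('s \<Rightarrow> real) \<Rightarrow> real^'a^'s^'n \<Rightarrow> nat \<Rightarrow> 's \<Rightarrow> real" where
  "state_dist A P \<mu> \<pi> 0 s = \<mu> s"
| "state_dist A P \<mu> \<pi> (Suc t) s' =
     (\<Sum>s\<in>UNIV. \<Sum>a\<in>joint_actions A. state_dist A P \<mu> \<pi> t s * joint_prob \<pi> s a * P s a s')"

definition disc_state_occ :: "('n::finite \<Rightarrow> 'a::finite set) \<Rightarrow> ('s::finite \<Rightarrow> ('n \<Rightarrow> 'a) \<Rightarrow> 's \<Rightarrow> real)
    \<Rightarrow> ('s \<Rightarrow> real) \<Rightarrow> real \<Rightarrow> real^'a^'s^'n \<Rightarrow> 's \<Rightarrow> real" where
  "disc_state_occ A P \<mu> \<gamma> \<pi> s = (1 - \<gamma>) * (\<Sum>t. \<gamma>^t * state_dist A P \<mu> \<pi> t s)"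

definition occ_measure :: "('n::finite \<Rightarrow> 'a::finite set) \<Rightarrow> ('s::finite \<Rightarrow> ('n \<Rightarrow> 'a) \<Rightarrow> 's \<Rightarrow> real)
    \<Rightarrow> ('s \<Rightarrow> real) \<Rightarrow> real \<Rightarrow> real^'a^'s^'n \<Rightarrow> real^'a^'s^'n" where
  "occ_measure A P \<mu> \<gamma> \<pi> = (\<chi> i. \<chi> s. \<chi> b. (1 - \<gamma>) *
      (\<Sum>t. \<gamma>^t * (\<Sum>a\<in>{a\<in>joint_actions A. a i = b}. state_dist A P \<mu> \<pi> t s * joint_prob \<pi> s a)))"

text \<open>pi_{-i}: the profile with agent i's component erased (set to 0).\<close>
definition minus_pol :: "'n::finite \<Rightarrow> real^'a::finite^'s::finite^'n \<Rightarrow> real^'a^'s^'n" where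
  "minus_pol i \<pi> = (\<chi> j. if j = i then 0 else \<pi>$j)"

definition upd_pol :: "real^'a::finite^'s::finite^'n::finite \<Rightarrow> 'n \<Rightarrow> real^'a^'s \<Rightarrow> real^'a^'s^'n" where
  "upd_pol \<pi> i x = (\<chi> j. if j = i then x else \<pi>$j)"

definition utility :: "('n::finite \<Rightarrow> (real^'a::finite^'s::finite^'n) \<times> (real^'a^'s^'n) \<Rightarrow> real)
    \<Rightarrow> ('n \<Rightarrow> 'a set) \<Rightarrow> ('s \<Rightarrow> ('n \<Rightarrow> 'a) \<Rightarrow> 's \<Rightarrow> real) \<Rightarrow> ('s \<Rightarrow> real) \<Rightarrow> real
    \<Rightarrow> 'n \<Rightarrow> real^'a^'s^'n \<Rightarrow> real" where
  "utility F A P \<mu> \<gamma> i \<pi> = F i (occ_measure A P \<mu> \<gamma> \<pi>, minus_pol i \<pi>)"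

definition is_nash :: "('n::finite \<Rightarrow> (real^'a::finite^'s::finite^'n) \<times> (real^'a^'s^'n) \<Rightarrow> real)
    \<Rightarrow> ('n \<Rightarrow> 'a set) \<Rightarrow> ('s \<Rightarrow> ('n \<Rightarrow> 'a) \<Rightarrow> 's \<Rightarrow> real) \<Rightarrow> ('s \<Rightarrow> real) \<Rightarrow> real
    \<Rightarrow> real^'a^'s^'n \<Rightarrow> bool" where
  "is_nash F A P \<mu> \<gamma> \<pi> \<longleftrightarrow>
     (\<forall>i. \<forall>x\<in>policy_set (A i). utility F A P \<mu> \<gamma> i (upd_pol \<pi> i x) \<le> utility F A P \<mu> \<gamma> i \<pi>)"

definition partial_grad :: "('n::finite \<Rightarrow> (real^'a::finite^'s::finite^'n) \<times> (real^'a^'s^'n) \<Rightarrow> real)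
    \<Rightarrow> ('n \<Rightarrow> 'a set) \<Rightarrow> ('s \<Rightarrow> ('n \<Rightarrow> 'a) \<Rightarrow> 's \<Rightarrow> real) \<Rightarrow> ('s \<Rightarrow> real) \<Rightarrow> real
    \<Rightarrow> 'n \<Rightarrow> real^'a^'s^'n \<Rightarrow> real^'a^'s" where
  "partial_grad F A P \<mu> \<gamma> i \<pi> =
     (THE g. GDERIV (\<lambda>x. utility F A P \<mu> \<gamma> i (upd_pol \<pi> i x)) (\<pi>$i) :> g)"

definition grad_field :: "('n::finite \<Rightarrow> (real^'a::finite^'s::finite^'n) \<times> (real^'a^'s^'n) \<Rightarrow> real)
    \<Rightarrow> ('n \<Rightarrow> 'a set) \<Rightarrow> ('s \<Rightarrow> ('n \<Rightarrow> 'a) \<Rightarrow> 's \<Rightarrow> real) \<Rightarrow> ('s \<Rightarrow> real) \<Rightarrow> real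
    \<Rightarrow> real^'a^'s^'n \<Rightarrow> real^'a^'s^'n" where
  "grad_field F A P \<mu> \<gamma> \<pi> = (\<chi> i. partial_grad F A P \<mu> \<gamma> i \<pi>)"

end

theory Submission
  imports Defs "HOL-Library.FuncSet"
begin

lemma joint_actions_PiE: "joint_actions A = PiE UNIV A"
  by (simp add: joint_actions_def PiE_UNIV_domain Pi_def)

lemma sum_joint_prod:
  fixes B :: "'n::finite \<Rightarrow> 'a::finite set" and f :: "'n \<Rightarrow> 'a \<Rightarrow> real"
  shows "(\<Sum>a\<in>joint_actions B. \<Prod>k\<in>UNIV. f k (a k)) = (\<Prod>k\<in>UNIV. \<Sum>c\<in>B k. f k c)"
  by (simp add: joint_actions_PiE prod_sum_PiE)

lemma joint_actions_fix:
  "b \<in> A j \<Longrightarrow> {a\<in>joint_actions A. a j = b} = joint_actions (A(j := {b}))"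
  by (auto simp: joint_actions_def)

lemma joint_actions_fix_empty:
  "b \<notin> A j \<Longrightarrow> {a\<in>joint_actions A. a j = b} = {}"
  by (auto simp: joint_actions_def)

definition Qm :: "('n::finite \<Rightarrow> 'a::finite set) \<Rightarrow> real^'a^'s::finite^'n \<Rightarrow> 's \<Rightarrow> real" where
  "Qm A \<rho> s = (\<Prod>k\<in>UNIV. \<Sum>c\<in>A k. \<bar>\<rho>$k$s$c\<bar>)"

lemma sum_abs_jp: "(\<Sum>a\<in>joint_actions A. \<bar>joint_prob \<rho> s a\<bar>) = Qm A \<rho> s"
  unfolding joint_prob_def Qm_def abs_prod by (rule sum_joint_prod)

lemma sum_jp: "(\<Sum>a\<in>joint_actions A. joint_prob \<rho> s a) = (\<Prod>k\<in>UNIV. \<Sum>c\<in>A k. \<rho>$k$s$c)"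
  unfolding joint_prob_def by (rule sum_joint_prod)

lemma Qm_nonneg: "0 \<le> Qm A \<rho> s"
  unfolding Qm_def by (intro prod_nonneg sum_nonneg) auto

lemma policy_sum: "p \<in> policy_set B \<Longrightarrow> (\<Sum>c\<in>B. p$s$c) = 1"
  by (simp add: policy_set_def)
lemma policy_nonneg: "p \<in> policy_set B \<Longrightarrow> 0 \<le> p$s$c"
  by (simp add: policy_set_def)
lemma policy_out: "p \<in> policy_set B \<Longrightarrow> c \<notin> B \<Longrightarrow> p$s$c = 0"
  by (simp add: policy_set_def)

lemma profile_pol: "\<rho> \<in> profile_set A \<Longrightarrow> \<rho>$k \<in> policy_set (A k)"
  by (simp add: profile_set_def)

lemma Qm_profile: assumes "\<rho> \<in> profile_set A" shows "Qm A \<rho> s = 1"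
proof -
  have "(\<Sum>c\<in>A k. \<bar>\<rho>$k$s$c\<bar>) = 1" for k
    using profile_pol[of \<rho> A k] policy_nonneg[of "\<rho>$k" "A k" s] policy_sum[of "\<rho>$k" "A k" s] assms
    by (simp add: abs_of_nonneg)
  then show ?thesis unfolding Qm_def by simp
qed

lemma sum_jp_profile: assumes "\<rho> \<in> profile_set A" shows "(\<Sum>a\<in>joint_actions A. joint_prob \<rho> s a) = 1"
proof -
  have "(\<Sum>c\<in>A k. \<rho>$k$s$c) = 1" for k
    using profile_pol[of \<rho> A k] policy_sum[of "\<rho>$k" "A k" s] assms by simp
  then show ?thesis unfolding sum_jp by simp
qed

lemma marg_profile:
  assumes "\<rho> \<in> profile_set A"
  shows "(\<Sum>a\<in>{a\<in>joint_actions A. a j = b}. joint_prob \<rho> s a) = \<rho>$j$s$b"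
proof (cases "b \<in> A j")
  case True
  have "(\<Sum>a\<in>{a\<in>joint_actions A. a j = b}. joint_prob \<rho> s a)
      = (\<Prod>k\<in>UNIV. \<Sum>c\<in>(A(j := {b})) k. \<rho>$k$s$c)"
    unfolding joint_actions_fix[of b A j, OF True] by (rule sum_jp)
  also have "\<dots> = (\<Prod>k\<in>UNIV. if k = j then \<rho>$j$s$b else 1)"
    using profile_pol[OF assms] policy_sum by (intro prod.cong) auto
  also have "\<dots> = \<rho>$j$s$b" by (simp add: prod.delta)
  finally show ?thesis .
next
  case False
  have "\<rho>$j$s$b = 0" using profile_pol[OF assms, of j] policy_out False by blast
  then show ?thesis using joint_actions_fix_empty[of b A j, OF False] by (simp only:) simp
qed

lemma upd_pol_nth: "upd_pol \<pi> i x $ k = (if k = i then x else \<pi>$k)"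
  by (simp add: upd_pol_def)
lemma minus_pol_upd: "minus_pol i (upd_pol \<pi> i x) = minus_pol i \<pi>"
  by (simp add: minus_pol_def upd_pol_def vec_eq_iff)
lemma upd_pol_same: "upd_pol \<pi> i (\<pi>$i) = \<pi>"
  by (simp add: upd_pol_def vec_eq_iff)
lemma upd_pol_profile: "\<pi> \<in> profile_set A \<Longrightarrow> x \<in> policy_set (A i) \<Longrightarrow> upd_pol \<pi> i x \<in> profile_set A"
  by (simp add: profile_set_def upd_pol_nth)

definition step :: "('n::finite \<Rightarrow> 'a::finite set) \<Rightarrow> ('s::finite \<Rightarrow> ('n \<Rightarrow> 'a) \<Rightarrow> 's \<Rightarrow> real)
    \<Rightarrow> real^'a^'s^'n \<Rightarrow> ('s \<Rightarrow> real) \<Rightarrow> 's \<Rightarrow> real" where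
  "step A P \<rho> v s' = (\<Sum>s\<in>UNIV. \<Sum>a\<in>joint_actions A. v s * joint_prob \<rho> s a * P s a s')"

lemma state_dist_Suc': "state_dist A P \<mu> \<rho> (Suc t) = step A P \<rho> (state_dist A P \<mu> \<rho> t)"
  by (simp add: step_def fun_eq_iff)

lemma step_diff: "step A P \<rho> (\<lambda>s. u s - w s) s' = step A P \<rho> u s' - step A P \<rho> w s'"
  by (simp add: step_def left_diff_distrib sum_subtractf)

lemma step_cmult: "step A P \<rho> (\<lambda>s. c * u s) s' = c * step A P \<rho> u s'"
  by (simp add: step_def sum_distrib_left mult.assoc)

lemma swap3: "(\<Sum>s'\<in>C. \<Sum>s\<in>S. \<Sum>a\<in>J. f s a s') = (\<Sum>s\<in>S. \<Sum>a\<in>J. \<Sum>s'\<in>C. f s a s')"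
proof -
  have "(\<Sum>s'\<in>C. \<Sum>s\<in>S. \<Sum>a\<in>J. f s a s') = (\<Sum>s\<in>S. \<Sum>s'\<in>C. \<Sum>a\<in>J. f s a s')"
    by (rule sum.swap)
  also have "\<dots> = (\<Sum>s\<in>S. \<Sum>a\<in>J. \<Sum>s'\<in>C. f s a s')"
    by (rule sum.cong[OF refl], rule sum.swap)
  finally show ?thesis .
qed

locale gumg =
  fixes A :: "'n::finite \<Rightarrow> 'a::finite set"
    and P :: "'s::finite \<Rightarrow> ('n \<Rightarrow> 'a) \<Rightarrow> 's \<Rightarrow> real"
    and \<mu> :: "'s \<Rightarrow> real" and \<gamma> :: real
  assumes gamma: "0 < \<gamma>" "\<gamma> < 1"
    and mu: "\<forall>s. 0 \<le> \<mu> s" "(\<Sum>s\<in>UNIV. \<mu> s) = 1"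
    and P: "\<forall>s. \<forall>a\<in>joint_actions A. (\<forall>s'. 0 \<le> P s a s') \<and> (\<Sum>s'\<in>UNIV. P s a s') = 1"
begin

lemma P_nonneg: "a \<in> joint_actions A \<Longrightarrow> 0 \<le> P s a s'" using P by blast
lemma P_sum: "a \<in> joint_actions A \<Longrightarrow> (\<Sum>s'\<in>UNIV. P s a s') = 1" using P by blast

lemma step_sum: "(\<Sum>s'\<in>UNIV. step A P \<rho> v s') = (\<Sum>s\<in>UNIV. v s * (\<Sum>a\<in>joint_actions A. joint_prob \<rho> s a))"
proof -
  have "(\<Sum>s'\<in>UNIV. step A P \<rho> v s') = (\<Sum>s\<in>UNIV. \<Sum>a\<in>joint_actions A. \<Sum>s'\<in>UNIV. v s * joint_prob \<rho> s a * P s a s')"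
    unfolding step_def by (rule swap3)
  also have "\<dots> = (\<Sum>s\<in>UNIV. \<Sum>a\<in>joint_actions A. v s * joint_prob \<rho> s a)"
    by (intro sum.cong refl) (simp add: P_sum flip: sum_distrib_left)
  finally show ?thesis by (simp add: sum_distrib_left)
qed

lemma step_bound: "(\<Sum>s'\<in>UNIV. \<bar>step A P \<rho> v s'\<bar>) \<le> (\<Sum>s\<in>UNIV. \<bar>v s\<bar> * Qm A \<rho> s)"
proof -
  have "(\<Sum>s'\<in>UNIV. \<bar>step A P \<rho> v s'\<bar>) \<le> (\<Sum>s'\<in>UNIV. \<Sum>s\<in>UNIV. \<Sum>a\<in>joint_actions A. \<bar>v s\<bar> * \<bar>joint_prob \<rho> s a\<bar> * P s a s')"
  proof (intro sum_mono)
    fix s'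
    have "\<bar>step A P \<rho> v s'\<bar> \<le> (\<Sum>s\<in>UNIV. \<Sum>a\<in>joint_actions A. \<bar>v s * joint_prob \<rho> s a * P s a s'\<bar>)"
      unfolding step_def by (rule order_trans[OF sum_abs sum_mono[OF sum_abs]])
    also have "\<dots> = (\<Sum>s\<in>UNIV. \<Sum>a\<in>joint_actions A. \<bar>v s\<bar> * \<bar>joint_prob \<rho> s a\<bar> * P s a s')"
      by (intro sum.cong refl) (simp add: abs_mult P_nonneg)
    finally show "\<bar>step A P \<rho> v s'\<bar> \<le> \<dots>" .
  qed
  also have "\<dots> = (\<Sum>s\<in>UNIV. \<Sum>a\<in>joint_actions A. \<Sum>s'\<in>UNIV. \<bar>v s\<bar> * \<bar>joint_prob \<rho> s a\<bar> * P s a s')"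
    by (rule swap3)
  also have "\<dots> = (\<Sum>s\<in>UNIV. \<Sum>a\<in>joint_actions A. \<bar>v s\<bar> * \<bar>joint_prob \<rho> s a\<bar>)"
    by (intro sum.cong refl) (simp add: P_sum flip: sum_distrib_left)
  also have "\<dots> = (\<Sum>s\<in>UNIV. \<bar>v s\<bar> * Qm A \<rho> s)"
    by (simp add: sum_abs_jp flip: sum_distrib_left)
  finally show ?thesis .
qed

definition good :: "(real^'a^'s^'n) set" where
  "good = {\<rho>. \<forall>s. \<gamma> * Qm A \<rho> s < 1}"

definition qmax :: "real^'a^'s^'n \<Rightarrow> real" where
  "qmax \<rho> = Max (range (Qm A \<rho>))"

lemma qmax_ge: "Qm A \<rho> s \<le> qmax \<rho>"
  unfolding qmax_def by (rule Max_ge) auto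

lemma qmax_nonneg: "0 \<le> qmax \<rho>"
  using qmax_ge[of \<rho>] Qm_nonneg[of A \<rho>] order_trans by blast

lemma qmax_good: "\<rho> \<in> good \<Longrightarrow> \<gamma> * qmax \<rho> < 1"
proof -
  assume "\<rho> \<in> good"
  have "qmax \<rho> \<in> range (Qm A \<rho>)" unfolding qmax_def by (rule Max_in) auto
  then obtain s where "qmax \<rho> = Qm A \<rho> s" by auto
  then show ?thesis using \<open>\<rho> \<in> good\<close> by (simp add: good_def)
qed

lemma profile_good: "\<rho> \<in> profile_set A \<Longrightarrow> \<rho> \<in> good"
  using gamma by (simp add: good_def Qm_profile)

lemma step_bound_q: "(\<Sum>s'\<in>UNIV. \<bar>step A P \<rho> v s'\<bar>) \<le> qmax \<rho> * (\<Sum>s\<in>UNIV. \<bar>v s\<bar>)"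
proof -
  have "(\<Sum>s\<in>UNIV. \<bar>v s\<bar> * Qm A \<rho> s) \<le> (\<Sum>s\<in>UNIV. \<bar>v s\<bar> * qmax \<rho>)"
    by (intro sum_mono mult_left_mono qmax_ge) auto
  moreover have "(\<Sum>s\<in>UNIV. \<bar>v s\<bar> * qmax \<rho>) = qmax \<rho> * (\<Sum>s\<in>UNIV. \<bar>v s\<bar>)"
    by (simp add: sum_distrib_left mult.commute)
  ultimately show ?thesis using step_bound[of \<rho> v] by linarith
qed

lemma sd_bound: "(\<Sum>s\<in>UNIV. \<bar>state_dist A P \<mu> \<rho> t s\<bar>) \<le> qmax \<rho> ^ t"
proof (induction t)
  case 0
  then show ?case using mu by simp
next
  case (Suc t)
  have "(\<Sum>s\<in>UNIV. \<bar>state_dist A P \<mu> \<rho> (Suc t) s\<bar>) \<le> qmax \<rho> * (\<Sum>s\<in>UNIV. \<bar>state_dist A P \<mu> \<rho> t s\<bar>)"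
    unfolding state_dist_Suc' by (rule step_bound_q)
  also have "\<dots> \<le> qmax \<rho> * qmax \<rho> ^ t"
    by (intro mult_left_mono Suc qmax_nonneg)
  finally show ?case by simp
qed

lemma sd_bound1: "\<bar>state_dist A P \<mu> \<rho> t s\<bar> \<le> qmax \<rho> ^ t"
  using member_le_sum[of s UNIV "\<lambda>s. \<bar>state_dist A P \<mu> \<rho> t s\<bar>"] sd_bound[of \<rho> t] by simp

lemma sd_summable: assumes "\<rho> \<in> good" shows "summable (\<lambda>t. \<gamma>^t * state_dist A P \<mu> \<rho> t s)"
proof (rule summable_comparison_test)
  show "summable (\<lambda>t. (\<gamma> * qmax \<rho>)^t)"
    using qmax_good[OF assms] gamma qmax_nonneg[of \<rho>] by (intro summable_geometric) simp
  show "\<exists>N. \<forall>n\<ge>N. norm (\<gamma>^n * state_dist A P \<mu> \<rho> n s) \<le> (\<gamma> * qmax \<rho>)^n"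
    using gamma sd_bound1[of \<rho>] by (auto simp: abs_mult power_mult_distrib intro!: mult_left_mono)
qed

definition Dsum :: "real^'a^'s^'n \<Rightarrow> 's \<Rightarrow> real" where
  "Dsum \<rho> s = (\<Sum>t. \<gamma>^t * state_dist A P \<mu> \<rho> t s)"

lemma Dsum_eq:
  assumes "\<rho> \<in> good"
  shows "Dsum \<rho> s' = \<mu> s' + \<gamma> * step A P \<rho> (Dsum \<rho>) s'"
proof -
  let ?f = "\<lambda>t. \<gamma>^t * state_dist A P \<mu> \<rho> t s'"
  have sm: "summable (\<lambda>t. \<gamma>^t * state_dist A P \<mu> \<rho> t s)" for s using sd_summable[OF assms] .
  have "(\<Sum>t. ?f (Suc t)) = Dsum \<rho> s' - \<mu> s'"
    using suminf_split_head[OF sm[of s']] by (simp add: Dsum_def)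
  moreover have "(\<Sum>t. ?f (Suc t)) = \<gamma> * step A P \<rho> (Dsum \<rho>) s'"
  proof -
    have "(\<lambda>t. ?f (Suc t)) = (\<lambda>t. \<gamma> * (\<Sum>s\<in>UNIV. \<Sum>a\<in>joint_actions A.
             (\<gamma>^t * state_dist A P \<mu> \<rho> t s) * (joint_prob \<rho> s a * P s a s')))"
      by (simp add: state_dist_Suc' step_def sum_distrib_left mult_ac)
    then have "(\<Sum>t. ?f (Suc t)) = \<gamma> * (\<Sum>t. \<Sum>s\<in>UNIV. \<Sum>a\<in>joint_actions A.
             (\<gamma>^t * state_dist A P \<mu> \<rho> t s) * (joint_prob \<rho> s a * P s a s'))"
      by (simp add: suminf_mult summable_sum summable_mult2 sm)
    also have "(\<Sum>t. \<Sum>s\<in>UNIV. \<Sum>a\<in>joint_actions A.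
             (\<gamma>^t * state_dist A P \<mu> \<rho> t s) * (joint_prob \<rho> s a * P s a s'))
       = (\<Sum>s\<in>UNIV. \<Sum>a\<in>joint_actions A. \<Sum>t. (\<gamma>^t * state_dist A P \<mu> \<rho> t s) * (joint_prob \<rho> s a * P s a s'))"
      by (simp add: suminf_sum summable_sum summable_mult2 sm)
    also have "\<dots> = step A P \<rho> (Dsum \<rho>) s'"
    proof -
      have e: "(\<Sum>t. (\<gamma>^t * state_dist A P \<mu> \<rho> t s) * c) = Dsum \<rho> s * c" for s c
        using suminf_mult2[OF sm[of s], of c] by (simp add: Dsum_def)
      show ?thesis unfolding step_def by (simp only: e) (simp only: mult.assoc)
    qed
    finally show ?thesis .
  qed
  ultimately show ?thesis by simp
qed

lemma homog_zero:
  assumes "\<rho> \<in> good" "\<And>s. v s = \<gamma> * step A P \<rho> v s"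
  shows "v s = 0"
proof -
  let ?S = "\<Sum>s\<in>UNIV. \<bar>v s\<bar>"
  have "?S = \<gamma> * (\<Sum>s\<in>UNIV. \<bar>step A P \<rho> v s\<bar>)"
    using gamma by (subst assms(2)) (simp add: abs_mult sum_distrib_left)
  also have "\<dots> \<le> \<gamma> * (qmax \<rho> * ?S)"
    using gamma by (intro mult_left_mono step_bound_q) auto
  finally have "(1 - \<gamma> * qmax \<rho>) * ?S \<le> 0" by (simp add: algebra_simps)
  moreover have "0 \<le> ?S" by (simp add: sum_nonneg)
  ultimately have "?S = 0" using qmax_good[OF assms(1)]
    by (smt (verit, ccfv_SIG) mult_pos_pos)
  then show ?thesis by (simp add: sum_nonneg_eq_0_iff)
qed

lemma Dsum_unique:
  assumes "\<rho> \<in> good" "\<And>s. u s = \<mu> s + \<gamma> * step A P \<rho> u s"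
  shows "u s = Dsum \<rho> s"
proof -
  have "(\<lambda>s. u s - Dsum \<rho> s) s = 0"
  proof (rule homog_zero[OF assms(1)])
    fix s show "u s - Dsum \<rho> s = \<gamma> * step A P \<rho> (\<lambda>s. u s - Dsum \<rho> s) s"
      using assms(2)[of s] Dsum_eq[OF assms(1), of s] by (simp add: step_diff algebra_simps)
  qed
  then show ?thesis by simp
qed

lemma dso_Dsum: "disc_state_occ A P \<mu> \<gamma> \<rho> s = (1 - \<gamma>) * Dsum \<rho> s"
  by (simp add: disc_state_occ_def Dsum_def)

definition marg :: "real^'a^'s^'n \<Rightarrow> 'n \<Rightarrow> 's \<Rightarrow> 'a \<Rightarrow> real" where
  "marg \<rho> j s b = (\<Sum>a\<in>{a\<in>joint_actions A. a j = b}. joint_prob \<rho> s a)"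

lemma occ_formula:
  assumes "\<rho> \<in> good"
  shows "occ_measure A P \<mu> \<gamma> \<rho> $ j $ s $ b = (1 - \<gamma>) * Dsum \<rho> s * marg \<rho> j s b"
proof -
  have sm: "summable (\<lambda>t. \<gamma>^t * state_dist A P \<mu> \<rho> t s)" using sd_summable[OF assms] .
  have "occ_measure A P \<mu> \<gamma> \<rho> $ j $ s $ b = (1 - \<gamma>) * (\<Sum>t. (\<gamma>^t * state_dist A P \<mu> \<rho> t s) * marg \<rho> j s b)"
    by (simp add: occ_measure_def marg_def sum_distrib_left mult.assoc)
  also have "\<dots> = (1 - \<gamma>) * Dsum \<rho> s * marg \<rho> j s b"
    by (simp only: suminf_mult2[OF sm] Dsum_def mult.assoc)
  finally show ?thesis .
qed

lemma occ_profile: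
  assumes "\<rho> \<in> profile_set A"
  shows "occ_measure A P \<mu> \<gamma> \<rho> $ j $ s $ b = disc_state_occ A P \<mu> \<gamma> \<rho> s * \<rho>$j$s$b"
  using occ_formula[OF profile_good[OF assms]] marg_profile[OF assms]
  by (simp add: marg_def dso_Dsum)

end

context gumg begin
lemma dso_sum:
  assumes "\<rho> \<in> profile_set A"
  shows "(\<Sum>s\<in>UNIV. disc_state_occ A P \<mu> \<gamma> \<rho> s) = 1"
proof -
  have s0: "(\<Sum>s\<in>UNIV. Dsum \<rho> s) = (\<Sum>s\<in>UNIV. \<mu> s + \<gamma> * step A P \<rho> (Dsum \<rho>) s)"
    by (intro sum.cong refl Dsum_eq profile_good assms)
  have s1: "(\<Sum>s\<in>UNIV. \<mu> s + \<gamma> * step A P \<rho> (Dsum \<rho>) s) = (\<Sum>s\<in>UNIV. \<mu> s) + \<gamma> * (\<Sum>s\<in>UNIV. step A P \<rho> (Dsum \<rho>) s)"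
    by (simp only: sum.distrib sum_distrib_left)
  have s2: "(\<Sum>s\<in>UNIV. step A P \<rho> (Dsum \<rho>) s) = (\<Sum>s\<in>UNIV. Dsum \<rho> s)"
    unfolding step_sum using sum_jp_profile[OF assms] by simp
  have "(\<Sum>s\<in>UNIV. Dsum \<rho> s) = 1 + \<gamma> * (\<Sum>s\<in>UNIV. Dsum \<rho> s)"
    using s0 s1 s2 mu(2) by simp
  then have "(1 - \<gamma>) * (\<Sum>s\<in>UNIV. Dsum \<rho> s) = 1" by (simp add: algebra_simps)
  moreover have "(\<Sum>s\<in>UNIV. disc_state_occ A P \<mu> \<gamma> \<rho> s) = (1 - \<gamma>) * (\<Sum>s\<in>UNIV. Dsum \<rho> s)"
    by (simp add: dso_Dsum sum_distrib_left)
  ultimately show ?thesis by simp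
qed

end

lemma differentiable_prod':
  fixes f :: "'i \<Rightarrow> 'x::real_normed_vector \<Rightarrow> real"
  assumes "\<And>i. i \<in> I \<Longrightarrow> f i differentiable (at x within S)"
  shows "(\<lambda>x. \<Prod>i\<in>I. f i x) differentiable (at x within S)"
proof -
  from assms obtain f' where "\<And>i. i \<in> I \<Longrightarrow> (f i has_derivative f' i) (at x within S)"
    unfolding differentiable_def by metis
  then show ?thesis unfolding differentiable_def by (blast intro: has_derivative_prod)
qed

lemma differentiable_det:
  fixes M :: "'x::real_normed_vector \<Rightarrow> real^'n::finite^'n"
  assumes "\<And>i j. (\<lambda>x. M x $ i $ j) differentiable (at x0)"
  shows "(\<lambda>x. det (M x)) differentiable (at x0)"
  unfolding det_def
  by (intro differentiable_sum finite_permutations ballI differentiable_mult differentiable_const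
        differentiable_prod' assms) simp

lemma differentiable_vec_lambda:
  fixes f :: "'x::real_normed_vector \<Rightarrow> 'i::finite \<Rightarrow> 'b::euclidean_space"
  assumes "\<And>i. (\<lambda>x. f x i) differentiable (at x0)"
  shows "(\<lambda>x. \<chi> i. f x i) differentiable (at x0)"
proof (subst differentiable_componentwise_within, intro ballI)
  fix b :: "'b^'i" assume "b \<in> Basis"
  then obtain i u where b: "b = axis i u" "u \<in> Basis" unfolding Basis_vec_def by auto
  have "(\<lambda>x. f x i \<bullet> u) differentiable (at x0)"
    using assms[of i] b(2) by (subst (asm) differentiable_componentwise_within) auto
  then show "(\<lambda>x. (\<chi> i. f x i) \<bullet> b) differentiable (at x0)"
    using b by (simp add: inner_axis)
qed

lemma bl_comp3: "bounded_linear (\<lambda>x::real^'a::finite^'s::finite. x $ s $ c)"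
proof -
  have "bounded_linear (\<lambda>x::real^'a^'s. (\<lambda>y::real^'a. y $ c) (x $ s))"
    by (rule bounded_linear_compose[of "\<lambda>y::real^'a. y $ c"]) (rule bounded_linear_vec_nth)+
  then show ?thesis by simp
qed

lemma diff_comp3: "(\<lambda>x::real^'a::finite^'s::finite. x $ s $ c) differentiable (at x0)"
  by (rule bounded_linear_imp_differentiable[OF bl_comp3])

lemma diff_upd_comp: "(\<lambda>x. upd_pol \<pi> i x $ k $ s $ c) differentiable (at x0)"
  by (cases "k = i") (simp_all add: upd_pol_nth diff_comp3)

lemma diff_jp: "(\<lambda>x. joint_prob (upd_pol \<pi> i x) s a) differentiable (at x0)"
  unfolding joint_prob_def by (intro differentiable_prod' diff_upd_comp)

lemma cont_upd_comp: "continuous_on UNIV (\<lambda>x. upd_pol \<pi> i x $ k $ s $ c)"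
  by (cases "k = i") (simp_all add: upd_pol_nth linear_continuous_on bl_comp3)

lemma gderiv_of_has_derivative:
  fixes f :: "'v::euclidean_space \<Rightarrow> real"
  assumes "(f has_derivative f') (at x)"
  shows "GDERIV f x :> (\<Sum>b\<in>Basis. f' b *\<^sub>R b)"
proof -
  have lin: "linear f'" using assms has_derivative_linear by blast
  have eqh: "f' h = h \<bullet> (\<Sum>b\<in>Basis. f' b *\<^sub>R b)" for h
  proof -
    have "f' h = f' (\<Sum>b\<in>Basis. (h \<bullet> b) *\<^sub>R b)" by (simp add: euclidean_representation)
    also have "\<dots> = (\<Sum>b\<in>Basis. (h \<bullet> b) * f' b)"
      using lin by (simp add: linear_sum linear_scale)
    also have "\<dots> = h \<bullet> (\<Sum>b\<in>Basis. f' b *\<^sub>R b)"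
      by (simp add: inner_sum_right mult.commute)
    finally show ?thesis .
  qed
  show ?thesis unfolding gderiv_def
    by (rule has_derivative_eq_rhs[OF assms]) (rule ext, rule eqh)
qed

lemma gderiv_unique:
  fixes f :: "'v::real_inner \<Rightarrow> real"
  assumes "GDERIV f x :> g1" "GDERIV f x :> g2"
  shows "g1 = g2"
proof -
  have "(\<lambda>h. h \<bullet> g1) = (\<lambda>h. h \<bullet> g2)"
    using assms unfolding gderiv_def by (rule has_derivative_unique)
  then have "(g1 - g2) \<bullet> g1 = (g1 - g2) \<bullet> g2" by (rule fun_cong)
  then have "(g1 - g2) \<bullet> (g1 - g2) = 0" by (simp add: inner_diff_right)
  then show ?thesis by simp
qed

lemma gderiv_the:
  fixes f :: "'v::real_inner \<Rightarrow> real"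
  assumes "GDERIV f x :> g"
  shows "(THE g. GDERIV f x :> g) = g"
  by (rule the_equality[where P="\<lambda>g. GDERIV f x :> g", OF assms]) (rule gderiv_unique[OF _ assms])

context gumg
begin

lemma occ_in_set:
  assumes "\<rho> \<in> profile_set A" "\<And>s. 0 < disc_state_occ A P \<mu> \<gamma> \<rho> s"
  shows "occ_measure A P \<mu> \<gamma> \<rho> \<in> occ_set A"
proof -
  have "(\<Sum>s\<in>UNIV. \<Sum>a\<in>A j. occ_measure A P \<mu> \<gamma> \<rho> $ j $ s $ a) = 1" for j
    using dso_sum[OF assms(1)] policy_sum[OF profile_pol[OF assms(1), of j]]
    by (simp add: occ_profile[OF assms(1)] flip: sum_distrib_left)
  moreover have "0 \<le> occ_measure A P \<mu> \<gamma> \<rho> $ j $ s $ a" for j s a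
    using assms(2)[of s] policy_nonneg[OF profile_pol[OF assms(1), of j], of s a]
    by (simp add: occ_profile[OF assms(1)])
  moreover have "a \<notin> A j \<Longrightarrow> occ_measure A P \<mu> \<gamma> \<rho> $ j $ s $ a = 0" for j s a
    using policy_out[OF profile_pol[OF assms(1), of j], of a s]
    by (simp add: occ_profile[OF assms(1)])
  ultimately show ?thesis unfolding occ_set_def by blast
qed

end

context gumg begin
definition Nm :: "real^'a^'s^'n \<Rightarrow> real^'s^'s" where
  "Nm \<rho> = (\<chi> s' s. \<Sum>a\<in>joint_actions A. joint_prob \<rho> s a * P s a s')"

definition Bm :: "real^'a^'s^'n \<Rightarrow> real^'s^'s" where
  "Bm \<rho> = (\<chi> s' s. (if s' = s then 1 else 0) - \<gamma> * Nm \<rho> $ s' $ s)"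

lemma step_Nm: "step A P \<rho> v s' = (\<Sum>s\<in>UNIV. Nm \<rho> $ s' $ s * v s)"
  unfolding step_def Nm_def by (simp add: sum_distrib_right sum_distrib_left mult_ac)

lemma Bm_mult: "(Bm \<rho> *v w) $ s' = w $ s' - \<gamma> * step A P \<rho> (\<lambda>s. w $ s) s'"
proof -
  have "(Bm \<rho> *v w) $ s' = (\<Sum>s\<in>UNIV. (if s' = s then 1 else 0) * w $ s - \<gamma> * (Nm \<rho> $ s' $ s * w $ s))"
    by (simp add: matrix_vector_mult_def Bm_def left_diff_distrib mult.assoc)
  also have "\<dots> = w $ s' - \<gamma> * step A P \<rho> (\<lambda>s. w $ s) s'"
  proof -
    have d: "(\<Sum>s\<in>UNIV. (if s' = s then 1 else 0) * w $ s) = w $ s'"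
    proof -
      have "(\<Sum>s\<in>UNIV. (if s' = s then 1 else 0) * w $ s) = (\<Sum>s\<in>UNIV. if s' = s then w $ s else 0)"
        by (rule sum.cong) auto
      then show ?thesis by simp
    qed
    have g: "(\<Sum>s\<in>UNIV. \<gamma> * (Nm \<rho> $ s' $ s * w $ s)) = \<gamma> * step A P \<rho> (\<lambda>s. w $ s) s'"
      by (simp only: step_Nm sum_distrib_left)
    show ?thesis by (simp only: sum_subtractf d g)
  qed
  finally show ?thesis .
qed

lemma Bm_solves: assumes "\<rho> \<in> good" shows "Bm \<rho> *v (\<chi> s. Dsum \<rho> s) = (\<chi> s. \<mu> s)"
proof -
  have e: "(\<lambda>s. (\<chi> s. Dsum \<rho> s) $ s) = Dsum \<rho>" by simp
  have "(Bm \<rho> *v (\<chi> s. Dsum \<rho> s)) $ s = \<mu> s" for s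
    unfolding Bm_mult e vec_lambda_beta using Dsum_eq[OF assms, of s] by linarith
  then show ?thesis by (simp add: vec_eq_iff)
qed

lemma Bm_det: assumes "\<rho> \<in> good" shows "det (Bm \<rho>) \<noteq> 0"
proof -
  have "\<forall>w. Bm \<rho> *v w = 0 \<longrightarrow> w = 0"
  proof (intro allI impI)
    fix w assume "Bm \<rho> *v w = 0"
    then have "\<And>s. (Bm \<rho> *v w) $ s = 0" by simp
    then have "\<And>s. w $ s = \<gamma> * step A P \<rho> (\<lambda>s. w $ s) s"
      using Bm_mult by (metis eq_iff_diff_eq_0)
    then have "\<And>s. (\<lambda>s. w $ s) s = 0" by (rule homog_zero[OF assms])
    then show "w = 0" by (simp add: vec_eq_iff)
  qed
  then obtain C where "C ** Bm \<rho> = mat 1" using matrix_left_invertible_ker by blast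
  then have "invertible (Bm \<rho>)"
    unfolding invertible_def using matrix_left_right_inverse by blast
  then show ?thesis by (simp add: invertible_det_nz)
qed

definition Cm :: "real^'a^'s^'n \<Rightarrow> 's \<Rightarrow> real^'s^'s" where
  "Cm \<rho> k = (\<chi> i j. if j = k then \<mu> i else Bm \<rho> $ i $ j)"

lemma Dsum_cramer: assumes "\<rho> \<in> good" shows "Dsum \<rho> s = det (Cm \<rho> s) / det (Bm \<rho>)"
proof -
  have "(\<chi> s. Dsum \<rho> s) = (\<chi> k. det (\<chi> i j. if j = k then (\<chi> s. \<mu> s) $ i else Bm \<rho> $ i $ j) / det (Bm \<rho>))"
    using cramer[OF Bm_det[OF assms]] Bm_solves[OF assms] by blast
  then have "(\<chi> s. Dsum \<rho> s) $ s = (\<chi> k. det (\<chi> i j. if j = k then (\<chi> s. \<mu> s) $ i else Bm \<rho> $ i $ j) / det (Bm \<rho>)) $ s"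
    by (rule arg_cong)
  then show ?thesis unfolding Cm_def by (simp only: vec_lambda_beta)
qed

end

context gumg begin

lemma Nm_nth: "Nm \<rho> $ s' $ s = (\<Sum>a\<in>joint_actions A. joint_prob \<rho> s a * P s a s')"
  by (simp add: Nm_def)
lemma Bm_nth: "Bm \<rho> $ s' $ s = (if s' = s then 1 else 0) - \<gamma> * Nm \<rho> $ s' $ s"
  by (simp add: Bm_def)
lemma Cm_nth: "Cm \<rho> k $ i $ j = (if j = k then \<mu> i else Bm \<rho> $ i $ j)"
  by (simp add: Cm_def)

lemma diff_Nm: "(\<lambda>x. Nm (upd_pol \<pi> i x) $ s' $ s) differentiable (at x0)"
  unfolding Nm_nth by (intro differentiable_sum ballI finite differentiable_mult diff_jp differentiable_const)

lemma diff_Bm: "(\<lambda>x. Bm (upd_pol \<pi> i x) $ s' $ s) differentiable (at x0)"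
  unfolding Bm_nth by (intro differentiable_diff differentiable_mult differentiable_const diff_Nm)

lemma diff_Cm: "(\<lambda>x. Cm (upd_pol \<pi> i x) k $ s' $ s) differentiable (at x0)"
  unfolding Cm_nth by (cases "s = k") (simp_all add: diff_Bm)

lemma diff_marg: "(\<lambda>x. marg (upd_pol \<pi> i x) j s b) differentiable (at x0)"
  unfolding marg_def by (intro differentiable_sum ballI diff_jp) (simp add: joint_actions_def)

lemma open_U: "open {x. upd_pol \<pi> i x \<in> good}"
proof -
  have "{x. upd_pol \<pi> i x \<in> good} = (\<Inter>s\<in>UNIV. {x. \<gamma> * Qm A (upd_pol \<pi> i x) s < 1})"
    by (auto simp: good_def)
  moreover have "open {x. \<gamma> * Qm A (upd_pol \<pi> i x) s < 1}" for s
    unfolding Qm_def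
    by (intro open_Collect_less continuous_intros cont_upd_comp)
  ultimately show ?thesis by auto
qed

definition OC :: "real^'a^'s^'n \<Rightarrow> 'n \<Rightarrow> real^'a^'s \<Rightarrow> real^'a^'s^'n" where
  "OC \<pi> i x = (\<chi> j s b. (1 - \<gamma>) * (det (Cm (upd_pol \<pi> i x) s) / det (Bm (upd_pol \<pi> i x)))
                        * marg (upd_pol \<pi> i x) j s b)"

lemma occ_OC: "upd_pol \<pi> i x \<in> good \<Longrightarrow> occ_measure A P \<mu> \<gamma> (upd_pol \<pi> i x) = OC \<pi> i x"
  unfolding OC_def by (simp add: vec_eq_iff occ_formula Dsum_cramer)

lemma diff_OC:
  assumes "upd_pol \<pi> i x0 \<in> good"
  shows "OC \<pi> i differentiable (at x0)"
proof -
  have nz: "det (Bm (upd_pol \<pi> i x0)) \<noteq> 0" by (rule Bm_det[OF assms])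
  show ?thesis unfolding OC_def
    by (intro differentiable_vec_lambda differentiable_mult differentiable_divide differentiable_const
          differentiable_det diff_Cm diff_Bm diff_marg nz)
qed

lemma utility_grad:
  fixes F :: "'n \<Rightarrow> (real^'a^'s^'n) \<times> (real^'a^'s^'n) \<Rightarrow> real"
  assumes \<pi>: "\<pi> \<in> profile_set A"
    and Fd: "F i differentiable at (occ_measure A P \<mu> \<gamma> \<pi>, minus_pol i \<pi>)"
  shows "GDERIV (\<lambda>x. utility F A P \<mu> \<gamma> i (upd_pol \<pi> i x)) (\<pi>$i) :> partial_grad F A P \<mu> \<gamma> i \<pi>"
proof -
  let ?U = "{x. upd_pol \<pi> i x \<in> good}"
  let ?x0 = "\<pi>$i"
  have x0U: "?x0 \<in> ?U" using profile_good[OF \<pi>] by (simp add: upd_pol_same)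
  have eqU: "F i (OC \<pi> i x, minus_pol i \<pi>) = utility F A P \<mu> \<gamma> i (upd_pol \<pi> i x)" if "x \<in> ?U" for x
    using that by (simp add: utility_def minus_pol_upd occ_OC)
  have OCx0: "OC \<pi> i ?x0 = occ_measure A P \<mu> \<gamma> \<pi>"
    using occ_OC[of \<pi> i ?x0] x0U by (simp add: upd_pol_same)
  have d1: "(\<lambda>x. (OC \<pi> i x, minus_pol i \<pi>)) differentiable (at ?x0)"
    using diff_OC[of \<pi> i ?x0] x0U by (intro differentiable_Pair differentiable_const) auto
  have "(F i \<circ> (\<lambda>x. (OC \<pi> i x, minus_pol i \<pi>))) differentiable (at ?x0)"
    by (rule differentiable_chain_at[OF d1]) (simp add: OCx0 Fd)
  then obtain f' where f': "((\<lambda>x. F i (OC \<pi> i x, minus_pol i \<pi>)) has_derivative f') (at ?x0)"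
    unfolding differentiable_def o_def by blast
  have "((\<lambda>x. utility F A P \<mu> \<gamma> i (upd_pol \<pi> i x)) has_derivative f') (at ?x0)"
    by (rule has_derivative_transform_within_open[OF f' open_U x0U eqU]) auto
  then have g: "GDERIV (\<lambda>x. utility F A P \<mu> \<gamma> i (upd_pol \<pi> i x)) ?x0 :> (\<Sum>b\<in>Basis. f' b *\<^sub>R b)"
    by (rule gderiv_of_has_derivative)
  then have "partial_grad F A P \<mu> \<gamma> i \<pi> = (\<Sum>b\<in>Basis. f' b *\<^sub>R b)"
    unfolding partial_grad_def by (rule gderiv_the)
  then show ?thesis using g by simp
qed

end

lemma norm2_le: "norm (x::real^'a::finite^'s::finite) \<le> (\<Sum>s\<in>UNIV. \<Sum>b\<in>UNIV. \<bar>x$s$b\<bar>)"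
proof -
  have "norm x \<le> (\<Sum>s\<in>UNIV. norm (x$s))"
    unfolding norm_vec_def by (rule L2_set_le_sum) simp
  also have "\<dots> \<le> (\<Sum>s\<in>UNIV. \<Sum>b\<in>UNIV. \<bar>x$s$b\<bar>)"
    by (intro sum_mono norm_le_l1_cart)
  finally show ?thesis .
qed

lemma convex_policy_set: "convex (policy_set B)"
  unfolding convex_def policy_set_def
  by (auto simp: sum.distrib sum_distrib_left[symmetric] intro!: add_nonneg_nonneg mult_nonneg_nonneg)

lemma closed_policy_set: "closed (policy_set (B::'a::finite set) :: (real^'a^'s::finite) set)"
proof -
  have eq: "policy_set B = (\<Inter>s. (\<Inter>a. {p::real^'a^'s. 0 \<le> p$s$a}) \<inter> (\<Inter>a\<in>-B. {p. p$s$a = 0})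
      \<inter> {p. (\<Sum>a\<in>B. p$s$a) = 1})"
    by (auto simp: policy_set_def)
  have c: "continuous_on UNIV (\<lambda>p::real^'a^'s. p$s$a)" for s a
    by (rule linear_continuous_on[OF bl_comp3])
  show ?thesis unfolding eq
    by (intro closed_INT closed_Int ballI closed_Collect_le closed_Collect_eq continuous_on_const c
        continuous_on_sum allI) 
qed

lemma convex_profile_set: "convex (profile_set A)"
  unfolding convex_def profile_set_def by (auto intro!: convexD[OF convex_policy_set])

lemma closed_profile_set: "closed (profile_set (A::'n::finite \<Rightarrow> 'a::finite set) :: (real^'a^'s::finite^'n) set)"
proof -
  have eq: "profile_set A = (\<Inter>i. (\<lambda>\<pi>::real^'a^'s^'n. \<pi>$i) -` policy_set (A i))"
    by (auto simp: profile_set_def)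
  show ?thesis unfolding eq
    by (intro closed_INT ballI continuous_closed_vimage closed_policy_set linear_continuous_at bounded_linear_vec_nth)
qed

lemma proj_iff:
  fixes S :: "'v::euclidean_space set"
  assumes "convex S" "closed S" "y \<in> S"
  shows "(\<forall>\<eta>>0. y = closest_point S (y + \<eta> *\<^sub>R g)) \<longleftrightarrow> (\<forall>w\<in>S. g \<bullet> (w - y) \<le> 0)"
proof
  assume H: "\<forall>\<eta>>0. y = closest_point S (y + \<eta> *\<^sub>R g)"
  show "\<forall>w\<in>S. g \<bullet> (w - y) \<le> 0"
  proof
    fix w assume "w \<in> S"
    have "inner ((y + 1 *\<^sub>R g) - closest_point S (y + 1 *\<^sub>R g)) (w - closest_point S (y + 1 *\<^sub>R g)) \<le> 0"
      by (rule closest_point_dot[OF assms(1,2) \<open>w \<in> S\<close>])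
    then show "g \<bullet> (w - y) \<le> 0" using H[rule_format, of 1] by simp
  qed
next
  assume H: "\<forall>w\<in>S. g \<bullet> (w - y) \<le> 0"
  show "\<forall>\<eta>>0. y = closest_point S (y + \<eta> *\<^sub>R g)"
  proof (intro allI impI)
    fix \<eta> :: real assume "\<eta> > 0"
    show "y = closest_point S (y + \<eta> *\<^sub>R g)"
    proof (rule closest_point_unique[OF assms])
      show "\<forall>z\<in>S. dist (y + \<eta> *\<^sub>R g) y \<le> dist (y + \<eta> *\<^sub>R g) z"
      proof
        fix z assume "z \<in> S"
        let ?d = "\<eta> *\<^sub>R g" and ?e = "y - z"
        have "?d \<bullet> ?e = - (\<eta> * (g \<bullet> (z - y)))"
          by (simp add: inner_diff_right algebra_simps)
        moreover have "\<eta> * (g \<bullet> (z - y)) \<le> 0"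
          using H \<open>z \<in> S\<close> \<open>\<eta> > 0\<close> by (simp add: mult_nonneg_nonpos)
        ultimately have de: "0 \<le> ?d \<bullet> ?e" by simp
        have "(?d + ?e) \<bullet> (?d + ?e) = ?d \<bullet> ?d + 2 * (?d \<bullet> ?e) + ?e \<bullet> ?e"
          by (simp add: inner_add_left inner_add_right inner_commute)
        then have "?d \<bullet> ?d \<le> (?d + ?e) \<bullet> (?d + ?e)" using de inner_ge_zero[of ?e] by linarith
        then have "norm ?d \<le> norm (?d + ?e)" by (simp only: norm_le)
        then show "dist (y + ?d) y \<le> dist (y + ?d) z"
          by (simp add: dist_norm algebra_simps)
      qed
    qed
  qed
qed

lemma jp_upd: "joint_prob (upd_pol \<pi> i x) s a = x$s$(a i) * (\<Prod>k\<in>UNIV-{i}. \<pi>$k$s$(a k))"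
proof -
  have "joint_prob (upd_pol \<pi> i x) s a = upd_pol \<pi> i x $ i $ s $ (a i) * (\<Prod>k\<in>UNIV-{i}. upd_pol \<pi> i x $ k $ s $ (a k))"
    unfolding joint_prob_def by (rule prod.remove) auto
  also have "(\<Prod>k\<in>UNIV-{i}. upd_pol \<pi> i x $ k $ s $ (a k)) = (\<Prod>k\<in>UNIV-{i}. \<pi>$k$s$(a k))"
    by (intro prod.cong) (auto simp: upd_pol_nth)
  finally show ?thesis by (simp add: upd_pol_nth)
qed

lemma step_mix:
  assumes "\<And>s b. V s * x$s$b = c1 * (V1 s * x1$s$b) + c2 * (V2 s * x2$s$b)"
  shows "step A P (upd_pol \<pi> i x) V s' = c1 * step A P (upd_pol \<pi> i x1) V1 s' + c2 * step A P (upd_pol \<pi> i x2) V2 s'"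
proof -
  let ?R = "\<lambda>s a. (\<Prod>k\<in>UNIV-{i}. \<pi>$k$s$(a k)) * P s a s'"
  have t: "W s * joint_prob (upd_pol \<pi> i y) s a * P s a s' = (W s * y$s$(a i)) * ?R s a" for W y s a
    by (simp add: jp_upd mult_ac)
  have "V s * joint_prob (upd_pol \<pi> i x) s a * P s a s'
      = c1 * (V1 s * joint_prob (upd_pol \<pi> i x1) s a * P s a s') + c2 * (V2 s * joint_prob (upd_pol \<pi> i x2) s a * P s a s')" for s a
    unfolding t assms by (simp add: algebra_simps)
  then show ?thesis unfolding step_def by (simp add: sum.distrib sum_distrib_left)
qed

context gumg begin

abbreviation dso where "dso \<equiv> disc_state_occ A P \<mu> \<gamma>"

definition mixpol :: "real^'a^'s^'n \<Rightarrow> 'n \<Rightarrow> real^'a^'s \<Rightarrow> real \<Rightarrow> real^'a^'s" where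
  "mixpol \<pi> i w t = (\<chi> s b. ((1-t) * dso \<pi> s * \<pi>$i$s$b + t * dso (upd_pol \<pi> i w) s * w$s$b)
                           / ((1-t) * dso \<pi> s + t * dso (upd_pol \<pi> i w) s))"

lemma mix_pos:
  fixes d0 d1 t :: real
  assumes "0 < d0" "0 < d1" "0 \<le> t" "t \<le> 1"
  shows "min d0 d1 \<le> (1-t) * d0 + t * d1" "0 < (1-t) * d0 + t * d1"
proof -
  have "(1-t) * min d0 d1 \<le> (1-t) * d0" "t * min d0 d1 \<le> t * d1"
    using assms by (auto intro!: mult_left_mono)
  then show "min d0 d1 \<le> (1-t) * d0 + t * d1" by (simp add: algebra_simps)
  then show "0 < (1-t) * d0 + t * d1" using assms by linarith
qed

lemma mix_props:
  assumes \<pi>: "\<pi> \<in> profile_set A" and w: "w \<in> policy_set (A i)"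
    and A2: "\<forall>\<rho>\<in>profile_set A. \<forall>s. 0 < dso \<rho> s"
    and t: "0 \<le> t" "t \<le> 1"
  shows "mixpol \<pi> i w t \<in> policy_set (A i)"
    and "occ_measure A P \<mu> \<gamma> (upd_pol \<pi> i (mixpol \<pi> i w t))
         = (1-t) *\<^sub>R occ_measure A P \<mu> \<gamma> \<pi> + t *\<^sub>R occ_measure A P \<mu> \<gamma> (upd_pol \<pi> i w)"
proof -
  define \<pi>' where "\<pi>' = upd_pol \<pi> i w"
  have \<pi>': "\<pi>' \<in> profile_set A" unfolding \<pi>'_def by (rule upd_pol_profile[OF \<pi> w])
  define d0 where "d0 = dso \<pi>"
  define d1 where "d1 = dso \<pi>'"
  define dt where "dt = (\<lambda>s. (1-t) * d0 s + t * d1 s)"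
  define x0 where "x0 = \<pi>$i"
  have x0: "x0 \<in> policy_set (A i)" unfolding x0_def using profile_pol[OF \<pi>] .
  have d0p: "0 < d0 s" for s unfolding d0_def using A2 \<pi> by blast
  have d1p: "0 < d1 s" for s unfolding d1_def using A2 \<pi>' by blast
  have dtp: "0 < dt s" for s unfolding dt_def using mix_pos(2)[OF d0p d1p t] .
  have pt_nth: "mixpol \<pi> i w t $ s $ b = ((1-t) * d0 s * x0$s$b + t * d1 s * w$s$b) / dt s" for s b
    by (simp add: mixpol_def d0_def d1_def dt_def x0_def \<pi>'_def)
  define pt where "pt = mixpol \<pi> i w t"
  show ptpol: "mixpol \<pi> i w t \<in> policy_set (A i)"
  proof -
    have "0 \<le> pt $ s $ b" for s b
      unfolding pt_def pt_nth using dtp[of s] d0p[of s] d1p[of s] t policy_nonneg[OF x0, of s b] policy_nonneg[OF w, of s b]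
      by (intro divide_nonneg_pos add_nonneg_nonneg mult_nonneg_nonneg) auto
    moreover have "b \<notin> A i \<Longrightarrow> pt $ s $ b = 0" for s b
      unfolding pt_def pt_nth using policy_out[OF x0, of b s] policy_out[OF w, of b s] by simp
    moreover have "(\<Sum>b\<in>A i. pt $ s $ b) = 1" for s
    proof -
      have "(\<Sum>b\<in>A i. pt $ s $ b) = (\<Sum>b\<in>A i. (1-t) * d0 s * x0$s$b + t * d1 s * w$s$b) / dt s"
        unfolding pt_def pt_nth by (simp add: sum_divide_distrib)
      also have "\<dots> = ((1-t) * d0 s * (\<Sum>b\<in>A i. x0$s$b) + t * d1 s * (\<Sum>b\<in>A i. w$s$b)) / dt s"
        by (simp add: sum.distrib sum_distrib_left)
      also have "\<dots> = 1" using policy_sum[OF x0, of s] policy_sum[OF w, of s] dtp[of s]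
        by (simp add: dt_def)
      finally show ?thesis .
    qed
    ultimately show ?thesis unfolding pt_def policy_set_def by blast
  qed
  define \<rho> where "\<rho> = upd_pol \<pi> i pt"
  have \<rho>: "\<rho> \<in> profile_set A" unfolding \<rho>_def pt_def by (rule upd_pol_profile[OF \<pi> ptpol])
  have dso_rho: "dso \<rho> s = dt s" for s
  proof -
    define u where "u = (\<lambda>s. dt s / (1 - \<gamma>))"
    have g1: "1 - \<gamma> > 0" using gamma by simp
    have g1': "1 - \<gamma> \<noteq> 0" using gamma by simp
    have D0: "Dsum \<pi> s = d0 s / (1-\<gamma>)" for s using g1 by (simp add: d0_def dso_Dsum)
    have D1: "Dsum \<pi>' s = d1 s / (1-\<gamma>)" for s using g1 by (simp add: d1_def dso_Dsum)
    have "step A P (upd_pol \<pi> i pt) u s' = (1-t) * step A P (upd_pol \<pi> i x0) (Dsum \<pi>) s' + t * step A P (upd_pol \<pi> i w) (Dsum \<pi>') s'" for s'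
    proof (rule step_mix)
      fix s b
      show "u s * pt$s$b = (1-t) * (Dsum \<pi> s * x0$s$b) + t * (Dsum \<pi>' s * w$s$b)"
      proof -
        have dn: "dt s \<noteq> 0" using dtp[of s] by simp
        have "u s * pt$s$b = ((1-t) * d0 s * x0$s$b + t * d1 s * w$s$b) / (1-\<gamma>)"
          unfolding u_def pt_def pt_nth using dn g1' by (simp add: field_simps)
        also have "\<dots> = (1-t) * (Dsum \<pi> s * x0$s$b) + t * (Dsum \<pi>' s * w$s$b)"
          unfolding D0 D1 by (simp add: add_divide_distrib ac_simps)
        finally show ?thesis .
      qed
    qed
    then have st: "step A P \<rho> u s' = (1-t) * step A P \<pi> (Dsum \<pi>) s' + t * step A P \<pi>' (Dsum \<pi>') s'" for s'
      by (simp add: \<rho>_def x0_def upd_pol_same \<pi>'_def)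
    have "u s' = \<mu> s' + \<gamma> * step A P \<rho> u s'" for s'
    proof -
      have e0: "Dsum \<pi> s' = \<mu> s' + \<gamma> * step A P \<pi> (Dsum \<pi>) s'" by (rule Dsum_eq[OF profile_good[OF \<pi>]])
      have e1: "Dsum \<pi>' s' = \<mu> s' + \<gamma> * step A P \<pi>' (Dsum \<pi>') s'" by (rule Dsum_eq[OF profile_good[OF \<pi>']])
      have "u s' = (1-t) * Dsum \<pi> s' + t * Dsum \<pi>' s'"
        unfolding u_def D0 D1 dt_def by (simp add: add_divide_distrib ac_simps)
      then show ?thesis unfolding st using e0 e1 by (simp add: algebra_simps)
    qed
    then have "u s = Dsum \<rho> s" by (rule Dsum_unique[OF profile_good[OF \<rho>]])
    then have "Dsum \<rho> s = dt s / (1 - \<gamma>)" by (simp add: u_def)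
    then show ?thesis using g1' by (simp add: dso_Dsum)
  qed
  show "occ_measure A P \<mu> \<gamma> (upd_pol \<pi> i (mixpol \<pi> i w t))
         = (1-t) *\<^sub>R occ_measure A P \<mu> \<gamma> \<pi> + t *\<^sub>R occ_measure A P \<mu> \<gamma> (upd_pol \<pi> i w)"
  proof -
    have "occ_measure A P \<mu> \<gamma> \<rho> $ j $ s $ b
        = (1-t) * occ_measure A P \<mu> \<gamma> \<pi> $ j $ s $ b + t * occ_measure A P \<mu> \<gamma> \<pi>' $ j $ s $ b" for j s b
    proof (cases "j = i")
      case True
      then show ?thesis
        unfolding occ_profile[OF \<rho>] occ_profile[OF \<pi>] occ_profile[OF \<pi>'] dso_rho
        using dtp[of s]
        by (simp add: \<rho>_def \<pi>'_def upd_pol_nth pt_def pt_nth x0_def d0_def d1_def[unfolded \<pi>'_def])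
    next
      case False
      then show ?thesis
        unfolding occ_profile[OF \<rho>] occ_profile[OF \<pi>] occ_profile[OF \<pi>'] dso_rho
        by (simp add: \<rho>_def \<pi>'_def upd_pol_nth dt_def d0_def d1_def[unfolded \<pi>'_def] algebra_simps)
    qed
    then show ?thesis by (simp add: vec_eq_iff \<rho>_def pt_def \<pi>'_def)
  qed
qed

end

lemma best_VI:
  fixes u :: "'v::euclidean_space \<Rightarrow> real"
  assumes S: "convex S" and w: "w \<in> S" and x0: "x0 \<in> S"
    and grad: "GDERIV u x0 :> G" and best: "\<forall>v\<in>S. u v \<le> u x0"
  shows "G \<bullet> (w - x0) \<le> 0"
proof (rule ccontr)
  assume "\<not> G \<bullet> (w - x0) \<le> 0"
  then have l: "0 < G \<bullet> (w - x0)" by simp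
  define d where "d = w - x0"
  have f: "((\<lambda>t::real. x0 + t *\<^sub>R d) has_derivative (\<lambda>t. t *\<^sub>R d)) (at 0)"
    by (auto intro!: derivative_eq_intros)
  have g: "(u has_derivative (\<lambda>h. h \<bullet> G)) (at ((\<lambda>t::real. x0 + t *\<^sub>R d) 0))"
    using grad by (simp add: gderiv_def)
  have "((u \<circ> (\<lambda>t. x0 + t *\<^sub>R d)) has_derivative ((\<lambda>h. h \<bullet> G) \<circ> (\<lambda>t. t *\<^sub>R d))) (at 0)"
    by (rule diff_chain_at[OF f g])
  moreover have "((\<lambda>h. h \<bullet> G) \<circ> (\<lambda>t. t *\<^sub>R d)) = (*) (G \<bullet> d)"
    by (auto simp: fun_eq_iff inner_commute)
  ultimately have "DERIV (\<lambda>t. u (x0 + t *\<^sub>R d)) 0 :> G \<bullet> d"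
    by (simp add: has_field_derivative_def o_def)
  from DERIV_pos_inc_right[OF this l[folded d_def]]
  obtain \<delta> where \<delta>: "\<delta> > 0" "\<forall>h>0. h < \<delta> \<longrightarrow> u (x0 + 0 *\<^sub>R d) < u (x0 + (0 + h) *\<^sub>R d)" by blast
  define h where "h = min (\<delta>/2) 1"
  have h: "0 < h" "h < \<delta>" "h \<le> 1" using \<delta> by (auto simp: h_def)
  have "x0 + h *\<^sub>R d = (1 - h) *\<^sub>R x0 + h *\<^sub>R w" by (simp add: d_def algebra_simps)
  also have "\<dots> \<in> S" using convexD[OF S x0 w] h by simp
  finally have "u (x0 + h *\<^sub>R d) \<le> u x0" using best by blast
  moreover have "u x0 < u (x0 + h *\<^sub>R d)" using \<delta>(2) h by auto
  ultimately show False by simp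
qed

context gumg begin

lemma VI_best:
  fixes F :: "'n \<Rightarrow> (real^'a^'s^'n) \<times> (real^'a^'s^'n) \<Rightarrow> real"
  assumes \<pi>: "\<pi> \<in> profile_set A" and w: "w \<in> policy_set (A i)"
    and A2: "\<forall>\<rho>\<in>profile_set A. \<forall>s. 0 < dso \<rho> s"
    and A1i: "concave_on (occ_set A) (\<lambda>l. F i (l, minus_pol i \<pi>))"
    and grad: "GDERIV (\<lambda>x. utility F A P \<mu> \<gamma> i (upd_pol \<pi> i x)) (\<pi>$i) :> G"
    and VI: "\<forall>v\<in>policy_set (A i). G \<bullet> (v - \<pi>$i) \<le> 0"
  shows "utility F A P \<mu> \<gamma> i (upd_pol \<pi> i w) \<le> utility F A P \<mu> \<gamma> i \<pi>"
proof (rule ccontr)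
  define u where "u = (\<lambda>x. utility F A P \<mu> \<gamma> i (upd_pol \<pi> i x))"
  define x0 where "x0 = \<pi>$i"
  define h where "h = (\<lambda>l. F i (l, minus_pol i \<pi>))"
  define \<pi>' where "\<pi>' = upd_pol \<pi> i w"
  have \<pi>': "\<pi>' \<in> profile_set A" unfolding \<pi>'_def by (rule upd_pol_profile[OF \<pi> w])
  define L0 where "L0 = occ_measure A P \<mu> \<gamma> \<pi>"
  define L1 where "L1 = occ_measure A P \<mu> \<gamma> \<pi>'"
  have L0: "L0 \<in> occ_set A" unfolding L0_def using occ_in_set[OF \<pi>] A2 \<pi> by blast
  have L1: "L1 \<in> occ_set A" unfolding L1_def using occ_in_set[OF \<pi>'] A2 \<pi>' by blast
  have uh: "u x = h (occ_measure A P \<mu> \<gamma> (upd_pol \<pi> i x))" for x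
    by (simp add: u_def h_def utility_def minus_pol_upd)
  have u0: "u x0 = h L0" unfolding uh x0_def L0_def by (simp add: upd_pol_same)
  have u1: "u w = h L1" unfolding uh L1_def \<pi>'_def ..
  have ux0: "utility F A P \<mu> \<gamma> i \<pi> = u x0" by (simp add: u_def x0_def upd_pol_same)
  assume "\<not> utility F A P \<mu> \<gamma> i (upd_pol \<pi> i w) \<le> utility F A P \<mu> \<gamma> i \<pi>"
  then have \<Delta>: "0 < u w - u x0" unfolding ux0 by (simp add: u_def)
  define p where "p = mixpol \<pi> i w"
  have key1: "t * (u w - u x0) \<le> u (p t) - u x0" if t: "0 \<le> t" "t \<le> 1" for t
  proof -
    have "u (p t) = h ((1-t) *\<^sub>R L0 + t *\<^sub>R L1)"
      unfolding uh p_def mix_props(2)[OF \<pi> w A2 t] L0_def L1_def \<pi>'_def ..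
    also have "\<dots> \<ge> (1-t) * h L0 + t * h L1"
      using concave_onD[OF A1i[folded h_def] t L0 L1] .
    finally show ?thesis unfolding u0 u1 by (simp add: algebra_simps)
  qed
  define d0 where "d0 = dso \<pi>"
  define d1 where "d1 = dso \<pi>'"
  have d0p: "0 < d0 s" for s unfolding d0_def using A2 \<pi> by blast
  have d1p: "0 < d1 s" for s unfolding d1_def using A2 \<pi>' by blast
  define m where "m = (\<lambda>s. min (d0 s) (d1 s))"
  have mp: "0 < m s" for s unfolding m_def using d0p d1p by simp
  define C where "C = (\<Sum>s\<in>UNIV. \<Sum>b\<in>UNIV. d1 s * \<bar>w$s$b - x0$s$b\<bar> / m s)"
  have C0: "0 \<le> C" unfolding C_def using d1p mp
    by (intro sum_nonneg divide_nonneg_pos mult_nonneg_nonneg) (auto intro: less_imp_le)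
  have key2: "norm (p t - x0) \<le> t * C" if t: "0 \<le> t" "t \<le> 1" for t
  proof -
    define dt where "dt = (\<lambda>s. (1-t) * d0 s + t * d1 s)"
    have dtm: "m s \<le> dt s" for s unfolding dt_def m_def by (rule mix_pos(1)[OF d0p d1p t])
    have dtp: "0 < dt s" for s using dtm[of s] mp[of s] by linarith
    have comp: "(p t - x0) $ s $ b = t * (d1 s * (w$s$b - x0$s$b) / dt s)" for s b
    proof -
      have "(p t - x0) $ s $ b = ((1-t) * d0 s * x0$s$b + t * d1 s * w$s$b) / dt s - x0$s$b"
        by (simp add: p_def mixpol_def d0_def d1_def dt_def x0_def \<pi>'_def)
      also have "\<dots> = t * (d1 s * (w$s$b - x0$s$b) / dt s)"
        using dtp[of s] by (simp add: field_simps dt_def)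
      finally show ?thesis .
    qed
    have "\<bar>(p t - x0) $ s $ b\<bar> \<le> t * (d1 s * \<bar>w$s$b - x0$s$b\<bar> / m s)" for s b
    proof -
      have "\<bar>(p t - x0) $ s $ b\<bar> = t * (d1 s * \<bar>w$s$b - x0$s$b\<bar> / dt s)"
        unfolding comp using t dtp[of s] d1p[of s] by (simp add: abs_mult)
      also have "\<dots> \<le> t * (d1 s * \<bar>w$s$b - x0$s$b\<bar> / m s)"
        using t d1p[of s] mp[of s] dtm[of s]
        by (intro mult_left_mono divide_left_mono mult_nonneg_nonneg mult_pos_pos) auto
      finally show ?thesis .
    qed
    then have "(\<Sum>s\<in>UNIV. \<Sum>b\<in>UNIV. \<bar>(p t - x0) $ s $ b\<bar>) \<le> (\<Sum>s\<in>UNIV. \<Sum>b\<in>UNIV. t * (d1 s * \<bar>w$s$b - x0$s$b\<bar> / m s))"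
      by (intro sum_mono)
    also have "\<dots> = t * C" unfolding C_def by (simp add: sum_distrib_left)
    finally show ?thesis using norm2_le[of "p t - x0"] by linarith
  qed
  have key3: "(p t - x0) \<bullet> G \<le> 0" if t: "0 \<le> t" "t \<le> 1" for t
    using VI mix_props(1)[OF \<pi> w A2 t] unfolding p_def x0_def by (simp add: inner_commute)
  have der: "(u has_derivative (\<lambda>h. h \<bullet> G)) (at x0)"
    using grad by (simp add: gderiv_def u_def x0_def)
  define e where "e = (u w - u x0) / (2 * (C + 1))"
  have e0: "0 < e" unfolding e_def using \<Delta> C0 by simp
  obtain \<delta> where \<delta>: "\<delta> > 0" "\<And>y. norm (y - x0) < \<delta> \<Longrightarrow> norm (u y - u x0 - (y - x0) \<bullet> G) \<le> e * norm (y - x0)"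
    using der[unfolded has_derivative_at_alt] e0 by blast
  define t where "t = min 1 (\<delta> / (2 * (C + 1)))"
  have t: "0 < t" "t \<le> 1" "t \<le> \<delta> / (2 * (C + 1))" unfolding t_def using \<delta> C0 by auto
  have "t * C < \<delta>"
  proof -
    have "t * C \<le> \<delta> / (2 * (C + 1)) * C" using t C0 by (intro mult_right_mono) auto
    also have "\<dots> < \<delta>"
    proof -
      have pos: "0 < C * \<delta> + \<delta> * 2" using \<delta>(1) C0 mult_nonneg_nonneg[of C \<delta>] by linarith
      then show ?thesis using \<delta>(1) C0 by (simp add: field_simps)
    qed
    finally show ?thesis .
  qed
  then have n\<delta>: "norm (p t - x0) < \<delta>" using key2[of t] t by linarith
  have "u (p t) - u x0 \<le> (p t - x0) \<bullet> G + e * norm (p t - x0)"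
    using \<delta>(2)[OF n\<delta>] by (simp add: abs_le_iff)
  also have "\<dots> \<le> e * (t * C)"
    using key3[of t] key2[of t] t e0 by (smt (verit) mult_left_mono)
  also have "\<dots> = (t * (u w - u x0) / 2) * (C / (C + 1))"
    unfolding e_def using C0 by (simp add: field_simps)
  also have "\<dots> \<le> t * (u w - u x0) / 2"
    using t \<Delta> C0 by (intro mult_left_le) auto
  also have "\<dots> < t * (u w - u x0)" using t \<Delta> by simp
  finally show False using key1[of t] t by simp
qed

end

theorem theorem1:
  fixes A :: "'n::finite \<Rightarrow> 'a::finite set"
    and P :: "'s::finite \<Rightarrow> ('n \<Rightarrow> 'a) \<Rightarrow> 's \<Rightarrow> real"
    and \<mu> :: "'s \<Rightarrow> real" and \<gamma> :: real
    and F :: "'n \<Rightarrow> (real^'a^'s^'n) \<times> (real^'a^'s^'n) \<Rightarrow> real"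
    and \<pi>s :: "real^'a^'s^'n"
  assumes gamma: "0 < \<gamma>" "\<gamma> < 1"
    and mu: "\<forall>s. 0 \<le> \<mu> s" "(\<Sum>s\<in>UNIV. \<mu> s) = 1"
    and P: "\<forall>s. \<forall>a\<in>joint_actions A. (\<forall>s'. 0 \<le> P s a s') \<and> (\<Sum>s'\<in>UNIV. P s a s') = 1"
    and F_diff: "\<forall>i. \<forall>l\<in>occ_set A. \<forall>\<pi>\<in>profile_set A. F i differentiable at (l, minus_pol i \<pi>)"
    and A1: "\<forall>i. \<forall>\<pi>\<in>profile_set A. concave_on (occ_set A) (\<lambda>l. F i (l, minus_pol i \<pi>))"
    and A2: "\<forall>\<pi>\<in>profile_set A. \<forall>s. disc_state_occ A P \<mu> \<gamma> \<pi> s > 0"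
    and mem: "\<pi>s \<in> profile_set A"
  shows "(is_nash F A P \<mu> \<gamma> \<pi>s \<longleftrightarrow>
            (\<forall>\<eta>>0. \<pi>s = closest_point (profile_set A) (\<pi>s + \<eta> *\<^sub>R grad_field F A P \<mu> \<gamma> \<pi>s)))
       \<and> (is_nash F A P \<mu> \<gamma> \<pi>s \<longleftrightarrow>
            (\<forall>i. \<forall>\<eta>>0. \<pi>s$i = closest_point (policy_set (A i))
                                 (\<pi>s$i + \<eta> *\<^sub>R partial_grad F A P \<mu> \<gamma> i \<pi>s)))"
proof -
  interpret gumg A P \<mu> \<gamma> using gamma mu P by unfold_locales
  define G where "G = (\<lambda>i. partial_grad F A P \<mu> \<gamma> i \<pi>s)"
  define VI where "VI = (\<lambda>i. \<forall>w\<in>policy_set (A i). G i \<bullet> (w - \<pi>s$i) \<le> 0)"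
  have A2': "\<forall>\<rho>\<in>profile_set A. \<forall>s. 0 < disc_state_occ A P \<mu> \<gamma> \<rho> s" using A2 by blast
  have occ_mem: "occ_measure A P \<mu> \<gamma> \<pi>s \<in> occ_set A" using occ_in_set[OF mem] A2 mem by blast
  have grad: "GDERIV (\<lambda>x. utility F A P \<mu> \<gamma> i (upd_pol \<pi>s i x)) (\<pi>s$i) :> G i" for i
    unfolding G_def by (rule utility_grad[OF mem]) (use F_diff occ_mem mem in blast)
  have nash_VI: "is_nash F A P \<mu> \<gamma> \<pi>s \<longleftrightarrow> (\<forall>i. VI i)"
  proof
    assume N: "is_nash F A P \<mu> \<gamma> \<pi>s"
    show "\<forall>i. VI i"
    proof (intro allI)
      fix i
      show "VI i" unfolding VI_def
      proof
        fix w :: "real^'a^'s" assume w: "w \<in> policy_set (A i)"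
        show "G i \<bullet> (w - \<pi>s$i) \<le> 0"
        proof (rule best_VI[OF convex_policy_set w profile_pol[OF mem] grad])
          show "\<forall>v\<in>policy_set (A i). utility F A P \<mu> \<gamma> i (upd_pol \<pi>s i v) \<le> utility F A P \<mu> \<gamma> i (upd_pol \<pi>s i (\<pi>s $ i))"
            using N by (simp add: is_nash_def upd_pol_same)
        qed
      qed
    qed
  next
    assume V: "\<forall>i. VI i"
    show "is_nash F A P \<mu> \<gamma> \<pi>s" unfolding is_nash_def
    proof (intro allI ballI)
      fix i and x :: "real^'a^'s" assume x: "x \<in> policy_set (A i)"
      show "utility F A P \<mu> \<gamma> i (upd_pol \<pi>s i x) \<le> utility F A P \<mu> \<gamma> i \<pi>s"
        by (rule VI_best[OF mem x A2' _ grad]) (use A1 mem V in \<open>auto simp: VI_def\<close>)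
    qed
  qed
  have part2: "(\<forall>i. \<forall>\<eta>>0. \<pi>s$i = closest_point (policy_set (A i)) (\<pi>s$i + \<eta> *\<^sub>R partial_grad F A P \<mu> \<gamma> i \<pi>s))
      \<longleftrightarrow> (\<forall>i. VI i)"
    unfolding VI_def G_def
    using proj_iff[OF convex_policy_set closed_policy_set profile_pol[OF mem]] by simp
  have gf: "grad_field F A P \<mu> \<gamma> \<pi>s $ i = G i" for i by (simp add: grad_field_def G_def)
  have part1: "(\<forall>\<eta>>0. \<pi>s = closest_point (profile_set A) (\<pi>s + \<eta> *\<^sub>R grad_field F A P \<mu> \<gamma> \<pi>s))
      \<longleftrightarrow> (\<forall>i. VI i)"
  proof -
    have "(\<forall>\<eta>>0. \<pi>s = closest_point (profile_set A) (\<pi>s + \<eta> *\<^sub>R grad_field F A P \<mu> \<gamma> \<pi>s))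
        \<longleftrightarrow> (\<forall>w\<in>profile_set A. grad_field F A P \<mu> \<gamma> \<pi>s \<bullet> (w - \<pi>s) \<le> 0)"
      by (rule proj_iff[OF convex_profile_set closed_profile_set mem])
    also have "\<dots> \<longleftrightarrow> (\<forall>i. VI i)"
    proof
      assume H: "\<forall>w\<in>profile_set A. grad_field F A P \<mu> \<gamma> \<pi>s \<bullet> (w - \<pi>s) \<le> 0"
      show "\<forall>i. VI i" unfolding VI_def
      proof (intro allI ballI)
        fix i and w :: "real^'a^'s" assume w: "w \<in> policy_set (A i)"
        have "grad_field F A P \<mu> \<gamma> \<pi>s \<bullet> (upd_pol \<pi>s i w - \<pi>s) \<le> 0"
          using H upd_pol_profile[OF mem w] by blast
        moreover have "grad_field F A P \<mu> \<gamma> \<pi>s \<bullet> (upd_pol \<pi>s i w - \<pi>s) = G i \<bullet> (w - \<pi>s$i)"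
        proof -
          have "grad_field F A P \<mu> \<gamma> \<pi>s \<bullet> (upd_pol \<pi>s i w - \<pi>s)
              = (\<Sum>j\<in>UNIV. G j \<bullet> ((upd_pol \<pi>s i w - \<pi>s) $ j))"
            by (simp add: inner_vec_def gf)
          also have "\<dots> = (\<Sum>j\<in>UNIV. if j = i then G i \<bullet> (w - \<pi>s$i) else 0)"
            by (intro sum.cong) (auto simp: upd_pol_nth)
          also have "\<dots> = G i \<bullet> (w - \<pi>s$i)" by simp
          finally show ?thesis .
        qed
        ultimately show "G i \<bullet> (w - \<pi>s$i) \<le> 0" by simp
      qed
    next
      assume V: "\<forall>i. VI i"
      show "\<forall>w\<in>profile_set A. grad_field F A P \<mu> \<gamma> \<pi>s \<bullet> (w - \<pi>s) \<le> 0"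
      proof
        fix w :: "real^'a^'s^'n" assume w: "w \<in> profile_set A"
        have "grad_field F A P \<mu> \<gamma> \<pi>s \<bullet> (w - \<pi>s) = (\<Sum>j\<in>UNIV. G j \<bullet> (w$j - \<pi>s$j))"
          by (simp add: inner_vec_def gf)
        also have "\<dots> \<le> 0"
          using V profile_pol[OF w] by (intro sum_nonpos) (auto simp: VI_def)
        finally show "grad_field F A P \<mu> \<gamma> \<pi>s \<bullet> (w - \<pi>s) \<le> 0" .
      qed
    qed
    finally show ?thesis .
  qed
  show ?thesis using nash_VI part1 part2 by simp
qed

end
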